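(* Let $\varphi:\mathbb{R}\to\mathbb{R}_+$ be convex and twice differentiable, and suppose $\beta_\varphi>0$ satisfies $[\varphi'(x)]^2\le\beta_\varphi\varphi''(x)$ for all $|x|\le1$. Then for any $\beta\ge\beta_\varphi$, the aggregate classifier $\tilde h_n(x)=\hat\theta_n^\top H(x)$, where $\hat\theta_n$ is the mirror averaging aggregate with parameter $\beta$, satisfies $$E_n\varphi(-Y_n\tilde h_n(X_n))\le\min_{1\le j\le M}E\varphi(-Yh_j(X))+\frac{\beta\log M}{n}.$$
   Context: $(\mathcal{X},\mathcal{F})$ is a measurable space; $(X,Y)$ is a random pair with $X\in\mathcal{X}$, $Y\in\{-1,1\}$; $(X_1,Y_1),\dots,(X_n,Y_n)$ are i.i.d. copies of $(X,Y)$, $E_n$ is expectation w.r.t. them. $h_1,\dots,h_M:\mathcal{X}\to[-1,1]$ are fixed classifiers ($M\ge2$), $H(x)=(h_1(x),\dots,h_M(x))^\top$. $\Theta$ is the simplex in $\mathbb{R}^M$, $e_j$ the unit vectors. Loss: $Q((x,y),\theta)=\varphi(-y\theta^\top H(x))$. Mirror averaging aggregate with parameter $\beta$, with $Z_i=(X_i,Y_i)$: $\zeta_0=0$, $\zeta_i=\zeta_{i-1}+u_i$ ($i=1,\dots,n-1$), $u_i=(Q(Z_i,e_1),\dots,Q(Z_i,e_M))^\top$; $\theta_i^{(j)}=e^{-\zeta_i^{(j)}/\beta}/\sum_ke^{-\zeta_i^{(k)}/\beta}$ for $i=0,\dots,n-1$; $\hat\theta_n=\frac1n\sum_{i=1}^n\theta_{i-1}$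 (a function of $Z_1,\dots,Z_{n-1}$). *)

theory Defs
  imports "HOL-Probability.Probability"
begin

text \<open>Classifiers are indexed h 0, ..., h (M-1); a sample point z = (x, y) has x = fst z, y = snd z.
  The sample Z_1, ..., Z_n is a function Z :: nat => 'a * real drawn from PiM {1..n} (%_. P).\<close>

definition loss :: "(real \<Rightarrow> real) \<Rightarrow> nat \<Rightarrow> (nat \<Rightarrow> 'a \<Rightarrow> real) \<Rightarrow> ('a \<times> real) \<Rightarrow> (nat \<Rightarrow> real) \<Rightarrow> real" where
  "loss \<phi> M h z \<theta> = \<phi> (- snd z * (\<Sum>j<M. \<theta> j * h j (fst z)))"

definition zeta :: "(real \<Rightarrow> real) \<Rightarrow> nat \<Rightarrow> (nat \<Rightarrow> 'a \<Rightarrow> real) \<Rightarrow> (nat \<Rightarrow> 'a \<times> real) \<Rightarrow> nat \<Rightarrow> nat \<Rightarrow> real" where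
  "zeta \<phi> M h Z i j = (\<Sum>k\<in>{1..i}. loss \<phi> M h (Z k) (\<lambda>l. if l = j then 1 else 0))"

definition mirror_weight :: "(real \<Rightarrow> real) \<Rightarrow> nat \<Rightarrow> (nat \<Rightarrow> 'a \<Rightarrow> real) \<Rightarrow> real \<Rightarrow> (nat \<Rightarrow> 'a \<times> real) \<Rightarrow> nat \<Rightarrow> nat \<Rightarrow> real" where
  "mirror_weight \<phi> M h \<beta> Z i j =
     exp (- zeta \<phi> M h Z i j / \<beta>) / (\<Sum>k<M. exp (- zeta \<phi> M h Z i k / \<beta>))"

definition mirror_avg :: "(real \<Rightarrow> real) \<Rightarrow> nat \<Rightarrow> (nat \<Rightarrow> 'a \<Rightarrow> real) \<Rightarrow> real \<Rightarrow> nat \<Rightarrow> (nat \<Rightarrow> 'a \<times> real) \<Rightarrow> nat \<Rightarrow> real" where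
  "mirror_avg \<phi> M h \<beta> n Z j = (1 / real n) * (\<Sum>i\<in>{1..n}. mirror_weight \<phi> M h \<beta> Z (i - 1) j)"

end

theory Submission imports Defs begin

lemma loss_e:
  assumes "j < M"
  shows "loss \<phi> M h z (\<lambda>l. if l = j then 1 else 0) = \<phi> (- snd z * h j (fst z))"
proof -
  have "(\<Sum>l<M. (if l = j then 1 else 0) * h l (fst z)) = (\<Sum>l<M. if l = j then h l (fst z) else 0)"
    by (rule sum.cong) auto
  also have "\<dots> = h j (fst z)" using assms by simp
  finally show ?thesis unfolding loss_def by simp
qed

lemma simplex_abs:
  fixes \<theta> a :: "nat \<Rightarrow> real"
  assumes "\<And>j. j < M \<Longrightarrow> \<theta> j \<ge> 0" "(\<Sum>j<M. \<theta> j) = 1" "\<And>j. j < M \<Longrightarrow> \<bar>a j\<bar> \<le> 1"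
  shows "\<bar>\<Sum>j<M. \<theta> j * a j\<bar> \<le> 1"
proof -
  have "\<bar>\<Sum>j<M. \<theta> j * a j\<bar> \<le> (\<Sum>j<M. \<bar>\<theta> j * a j\<bar>)" by (rule sum_abs)
  also have "\<dots> \<le> (\<Sum>j<M. \<theta> j)"
    using assms by (intro sum_mono) (auto simp: abs_mult intro: mult_left_le)
  finally show ?thesis using assms by simp
qed

lemma concave_g:
  fixes \<phi> \<phi>' \<phi>'' :: "real \<Rightarrow> real" and \<beta>\<phi> \<beta> :: real
  assumes \<phi>_deriv: "\<And>x. (\<phi> has_real_derivative \<phi>' x) (at x)"
    and \<phi>'_deriv: "\<And>x. (\<phi>' has_real_derivative \<phi>'' x) (at x)"
    and \<beta>\<phi>_pos: "\<beta>\<phi> > 0"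
    and cond: "\<And>x. \<bar>x\<bar> \<le> 1 \<Longrightarrow> (\<phi>' x)\<^sup>2 \<le> \<beta>\<phi> * \<phi>'' x"
    and \<beta>: "\<beta> \<ge> \<beta>\<phi>"
  shows "convex_on {-1..1} (\<lambda>x. - exp (- \<phi> x / \<beta>))"
proof (rule convex_on_realI)
  have bp: "\<beta> > 0" using \<beta> \<beta>\<phi>_pos by simp
  define d where "d = (\<lambda>x. exp (- \<phi> x / \<beta>) * \<phi>' x / \<beta>)"
  define dd where "dd = (\<lambda>x. exp (- \<phi> x / \<beta>) * (\<phi>'' x / \<beta> - (\<phi>' x)\<^sup>2 / \<beta>\<^sup>2))"
  show "connected {-1..(1::real)}" by simp
  show D: "((\<lambda>x. - exp (- \<phi> x / \<beta>)) has_real_derivative d x) (at x)" for x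
    unfolding d_def
    using bp by (auto intro!: derivative_eq_intros \<phi>_deriv simp: field_simps)
  have DD: "(d has_real_derivative dd x) (at x)" for x
  proof -
    have e: "((\<lambda>x. exp (- \<phi> x / \<beta>)) has_real_derivative exp (- \<phi> x / \<beta>) * (- \<phi>' x / \<beta>)) (at x)"
      by (rule DERIV_fun_exp, rule DERIV_cdivide, rule DERIV_minus, rule \<phi>_deriv)
    have "((\<lambda>x. exp (- \<phi> x / \<beta>) * \<phi>' x / \<beta>) has_real_derivative
       (exp (- \<phi> x / \<beta>) * (- \<phi>' x / \<beta>) * \<phi>' x + \<phi>'' x * exp (- \<phi> x / \<beta>)) / \<beta>) (at x)"
      by (rule DERIV_cdivide, rule DERIV_mult[OF e \<phi>'_deriv])
    moreover have "(exp (- \<phi> x / \<beta>) * (- \<phi>' x / \<beta>) * \<phi>' x + \<phi>'' x * exp (- \<phi> x / \<beta>)) / \<beta>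
       = exp (- \<phi> x / \<beta>) * (\<phi>'' x / \<beta> - (\<phi>' x)\<^sup>2 / \<beta>\<^sup>2)"
      using bp by (simp add: power2_eq_square divide_simps) (simp add: algebra_simps)
    ultimately show ?thesis by (simp add: d_def dd_def)
  qed
  have ddnn: "dd x \<ge> 0" if "x \<in> {-1..1}" for x
  proof -
    have "\<bar>x\<bar> \<le> 1" using that by auto
    from cond[OF this] have c: "(\<phi>' x)\<^sup>2 \<le> \<beta>\<phi> * \<phi>'' x" .
    have "0 \<le> \<beta>\<phi> * \<phi>'' x" using c zero_le_power2[of "\<phi>' x"] by linarith
    then have "\<phi>'' x \<ge> 0" using \<beta>\<phi>_pos by (simp add: zero_le_mult_iff)
    then have "\<beta>\<phi> * \<phi>'' x \<le> \<beta> * \<phi>'' x" using \<beta> by (simp add: mult_right_mono)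
    with c have "(\<phi>' x)\<^sup>2 \<le> \<beta> * \<phi>'' x" by simp
    then have "(\<phi>' x)\<^sup>2 / \<beta>\<^sup>2 \<le> \<phi>'' x / \<beta>" using bp
      by (simp add: field_simps power2_eq_square)
    then show ?thesis unfolding dd_def by simp
  qed
  show "d x \<le> d y" if "x \<in> {-1..1}" "y \<in> {-1..1}" "x \<le> y" for x y
  proof (rule DERIV_nonneg_imp_increasing_open[OF \<open>x \<le> y\<close>])
    show "\<exists>z. (d has_real_derivative z) (at t) \<and> 0 \<le> z" if "x < t" "t < y" for t
    proof (intro exI conjI)
      show "(d has_real_derivative dd t) (at t)" by (rule DD)
      show "0 \<le> dd t" using that \<open>x \<in> {-1..1}\<close> \<open>y \<in> {-1..1}\<close> by (intro ddnn) auto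
    qed
    show "continuous_on {x..y} d"
      using DD by (meson DERIV_isCont continuous_at_imp_continuous_on)
  qed
qed


lemma exp_concave:
  fixes \<theta> :: "nat \<Rightarrow> real"
  assumes g: "convex_on {-1..1} (\<lambda>x. - exp (- \<phi> x / \<beta>))"
    and y: "y \<in> {-1, 1}" and hr: "\<And>j. j < M \<Longrightarrow> h j x \<in> {-1..1}"
    and t0: "\<And>j. j < M \<Longrightarrow> \<theta> j \<ge> 0" and t1: "(\<Sum>j<M. \<theta> j) = 1"
  shows "(\<Sum>j<M. \<theta> j * exp (- \<phi> (- y * h j x) / \<beta>)) \<le> exp (- \<phi> (- y * (\<Sum>j<M. \<theta> j * h j x)) / \<beta>)"
proof -
  have Mne: "{..<M} \<noteq> {}" using t1 by auto
  have yin: "- y * h j x \<in> {-1..1}" if "j < M" for j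
  proof -
    have "y = -1 \<or> y = 1" using y by auto
    then show ?thesis using hr[OF that] by (elim disjE) auto
  qed
  have "(\<lambda>x. - exp (- \<phi> x / \<beta>)) (\<Sum>j<M. \<theta> j *\<^sub>R (- y * h j x)) \<le> (\<Sum>j<M. \<theta> j * (\<lambda>x. - exp (- \<phi> x / \<beta>)) (- y * h j x))"
    apply (rule convex_on_sum[OF finite_lessThan Mne g t1])
     apply (meson lessThan_iff t0)
    apply (meson lessThan_iff yin)
    done
  moreover have "(\<Sum>j<M. \<theta> j *\<^sub>R (- y * h j x)) = - y * (\<Sum>j<M. \<theta> j * h j x)"
    by (simp add: sum_distrib_left algebra_simps)
  ultimately show ?thesis by (simp add: sum_negf)
qed

lemma weight_pos: "M > 0 \<Longrightarrow> (\<Sum>k<M. exp (- zeta \<phi> M h Z i k / \<beta>)) > 0"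
  by (intro sum_pos) auto

lemma weight_nonneg: "M > 0 \<Longrightarrow> mirror_weight \<phi> M h \<beta> Z i j \<ge> 0"
  unfolding mirror_weight_def by (intro divide_nonneg_pos weight_pos) simp_all

lemma weight_sum: "M > 0 \<Longrightarrow> (\<Sum>j<M. mirror_weight \<phi> M h \<beta> Z i j) = 1"
  unfolding mirror_weight_def using weight_pos[of M \<phi> h Z i \<beta>]
  by (simp add: sum_divide_distrib[symmetric])

lemma weight_cong:
  assumes "\<And>k. k \<in> {1..i} \<Longrightarrow> Z k = Z' k"
  shows "mirror_weight \<phi> M h \<beta> Z i j = mirror_weight \<phi> M h \<beta> Z' i j"
proof -
  have "zeta \<phi> M h Z i = zeta \<phi> M h Z' i"
    unfolding zeta_def using assms by (intro ext sum.cong) auto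
  then show ?thesis unfolding mirror_weight_def by simp
qed

lemma zeta_Suc: "zeta \<phi> M h Z (Suc i) j = zeta \<phi> M h Z i j + loss \<phi> M h (Z (Suc i)) (\<lambda>l. if l = j then 1 else 0)"
  unfolding zeta_def by simp

lemma zeta_0: "zeta \<phi> M h Z 0 j = 0"
  unfolding zeta_def by simp

lemma pathwise:
  assumes g: "convex_on {-1..1} (\<lambda>x. - exp (- \<phi> x / \<beta>))" and bp: "\<beta> > 0"
    and Mp: "M > 0" and jM: "j < M"
    and y: "\<And>k. k \<in> {1..n} \<Longrightarrow> snd (Z k) \<in> {-1, 1}"
    and hr: "\<And>k l. k \<in> {1..n} \<Longrightarrow> l < M \<Longrightarrow> h l (fst (Z k)) \<in> {-1..1}"
  shows "(\<Sum>i\<in>{1..n}. loss \<phi> M h (Z i) (mirror_weight \<phi> M h \<beta> Z (i - 1)))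
          \<le> zeta \<phi> M h Z n j + \<beta> * ln (real M)"
proof -
  define W where "W i = (\<Sum>k<M. exp (- zeta \<phi> M h Z i k / \<beta>))" for i
  have Wp: "W i > 0" for i unfolding W_def using weight_pos[OF Mp] .
  have step: "loss \<phi> M h (Z (Suc i)) (mirror_weight \<phi> M h \<beta> Z i) \<le> \<beta> * ln (W i) - \<beta> * ln (W (Suc i))"
    if "i < n" for i
  proof -
    let ?z = "Z (Suc i)"
    have ys: "snd ?z \<in> {-1, 1}" using y that by auto
    have hs: "\<And>l. l < M \<Longrightarrow> h l (fst ?z) \<in> {-1..1}" using hr that by auto
    have "(\<Sum>l<M. mirror_weight \<phi> M h \<beta> Z i l * exp (- \<phi> (- snd ?z * h l (fst ?z)) / \<beta>))
       \<le> exp (- \<phi> (- snd ?z * (\<Sum>l<M. mirror_weight \<phi> M h \<beta> Z i l * h l (fst ?z))) / \<beta>)"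
      by (rule exp_concave[OF g ys]) (use hs weight_nonneg[OF Mp] weight_sum[OF Mp] in auto)
    moreover have "(\<Sum>l<M. mirror_weight \<phi> M h \<beta> Z i l * exp (- \<phi> (- snd ?z * h l (fst ?z)) / \<beta>))
       = W (Suc i) / W i"
    proof -
      have "(\<Sum>l<M. mirror_weight \<phi> M h \<beta> Z i l * exp (- \<phi> (- snd ?z * h l (fst ?z)) / \<beta>))
          = (\<Sum>l<M. exp (- zeta \<phi> M h Z (Suc i) l / \<beta>) / W i)"
      proof (rule sum.cong[OF refl])
        fix l assume l: "l \<in> {..<M}"
        show "mirror_weight \<phi> M h \<beta> Z i l * exp (- \<phi> (- snd ?z * h l (fst ?z)) / \<beta>)
          = exp (- zeta \<phi> M h Z (Suc i) l / \<beta>) / W i"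
          using l unfolding mirror_weight_def zeta_Suc W_def[symmetric]
          by (simp add: loss_e add_divide_distrib exp_add[symmetric] diff_divide_distrib)
      qed
      also have "\<dots> = W (Suc i) / W i" unfolding W_def[of "Suc i"] by (simp add: sum_divide_distrib)
      finally show ?thesis .
    qed
    ultimately have "W (Suc i) / W i \<le> exp (- loss \<phi> M h ?z (mirror_weight \<phi> M h \<beta> Z i) / \<beta>)"
      unfolding loss_def by simp
    then have "ln (W (Suc i) / W i) \<le> - loss \<phi> M h ?z (mirror_weight \<phi> M h \<beta> Z i) / \<beta>"
      using Wp by (metis ln_exp ln_le_cancel_iff divide_pos_pos exp_gt_zero)
    then have "ln (W (Suc i)) - ln (W i) \<le> - loss \<phi> M h ?z (mirror_weight \<phi> M h \<beta> Z i) / \<beta>"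
      using Wp[of i] Wp[of "Suc i"] by (simp add: ln_div)
    then show ?thesis using bp by (simp add: field_simps)
  qed
  have "(\<Sum>i\<in>{1..n}. loss \<phi> M h (Z i) (mirror_weight \<phi> M h \<beta> Z (i - 1)))
      = (\<Sum>i<n. loss \<phi> M h (Z (Suc i)) (mirror_weight \<phi> M h \<beta> Z i))"
    by (simp add: sum.atLeast1_atMost_eq)
  also have "\<dots> \<le> (\<Sum>i<n. \<beta> * ln (W i) - \<beta> * ln (W (Suc i)))"
    by (intro sum_mono step) auto
  also have "\<dots> = \<beta> * ln (W 0) - \<beta> * ln (W n)"
    using sum_lessThan_telescope'[of "\<lambda>i. \<beta> * ln (W i)" n] by simp
  also have "W 0 = real M" unfolding W_def by (simp add: zeta_0)
  finally have L: "(\<Sum>i\<in>{1..n}. loss \<phi> M h (Z i) (mirror_weight \<phi> M h \<beta> Z (i - 1)))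
     \<le> \<beta> * ln (real M) - \<beta> * ln (W n)" .
  have "- (\<beta> * ln (W n)) \<le> zeta \<phi> M h Z n j"
  proof -
    have "exp (- zeta \<phi> M h Z n j / \<beta>) \<le> W n"
      unfolding W_def using jM by (intro member_le_sum) auto
    then have "- zeta \<phi> M h Z n j / \<beta> \<le> ln (W n)"
      using Wp by (subst ln_ge_iff) auto
    then show ?thesis using bp by (simp add: field_simps)
  qed
  with L show ?thesis by simp
qed

lemma jensen_avg:
  assumes cv: "convex_on UNIV \<phi>" and n: "n \<ge> 1"
  shows "loss \<phi> M h z (mirror_avg \<phi> M h \<beta> n Z)
     \<le> (1 / real n) * (\<Sum>i\<in>{1..n}. loss \<phi> M h z (mirror_weight \<phi> M h \<beta> Z (i - 1)))"
proof -
  define y where "y i = - snd z * (\<Sum>l<M. mirror_weight \<phi> M h \<beta> Z (i - 1) l * h l (fst z))" for i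
  have ne: "{1..n} \<noteq> {}" using n by auto
  have "\<phi> (\<Sum>i\<in>{1..n}. (1 / real n) *\<^sub>R y i) \<le> (\<Sum>i\<in>{1..n}. (1 / real n) * \<phi> (y i))"
    by (rule convex_on_sum[OF finite_atLeastAtMost ne cv]) (use n in auto)
  moreover have "(\<Sum>i\<in>{1..n}. (1 / real n) *\<^sub>R y i) = - snd z * (\<Sum>l<M. mirror_avg \<phi> M h \<beta> n Z l * h l (fst z))"
    unfolding y_def mirror_avg_def
    by (simp add: sum_distrib_left sum_distrib_right algebra_simps) (rule sum.swap)
  ultimately show ?thesis
    unfolding loss_def y_def by (simp add: sum_distrib_left)
qed


lemma avg_simplex:
  assumes "M > 0" "n \<ge> 1"
  shows "\<And>j. mirror_avg \<phi> M h \<beta> n Z j \<ge> 0" "(\<Sum>j<M. mirror_avg \<phi> M h \<beta> n Z j) = 1"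
proof -
  show "mirror_avg \<phi> M h \<beta> n Z j \<ge> 0" for j
    unfolding mirror_avg_def using assms by (intro mult_nonneg_nonneg sum_nonneg weight_nonneg) simp_all
  have "(\<Sum>j<M. mirror_avg \<phi> M h \<beta> n Z j) = (1 / real n) * (\<Sum>i\<in>{1..n}. \<Sum>j<M. mirror_weight \<phi> M h \<beta> Z (i - 1) j)"
  proof -
    have "(\<Sum>j<M. mirror_avg \<phi> M h \<beta> n Z j) = (1 / real n) * (\<Sum>j<M. \<Sum>i\<in>{1..n}. mirror_weight \<phi> M h \<beta> Z (i - 1) j)"
      unfolding mirror_avg_def by (simp add: sum_distrib_left)
    also have "(\<Sum>j<M. \<Sum>i\<in>{1..n}. mirror_weight \<phi> M h \<beta> Z (i - 1) j) = (\<Sum>i\<in>{1..n}. \<Sum>j<M. mirror_weight \<phi> M h \<beta> Z (i - 1) j)"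
      by (rule sum.swap)
    finally show ?thesis .
  qed
  also have "\<dots> = 1" using assms by (simp add: weight_sum)
  finally show "(\<Sum>j<M. mirror_avg \<phi> M h \<beta> n Z j) = 1" .
qed

theorem corollary5p3:
  fixes Mx :: "'a measure" and P :: "('a \<times> real) measure"
    and h :: "nat \<Rightarrow> 'a \<Rightarrow> real" and M n :: nat
    and \<phi> \<phi>' \<phi>'' :: "real \<Rightarrow> real" and \<beta>\<phi> \<beta> :: real
  assumes P: "prob_space P" and sets_P: "sets P = sets (Mx \<Otimes>\<^sub>M borel)"
    and Y: "AE z in P. snd z \<in> {-1, 1}"
    and M: "M \<ge> 2" and n: "n \<ge> 1"
    and h_meas: "\<And>j. j < M \<Longrightarrow> h j \<in> borel_measurable Mx"
    and h_range: "\<And>j x. j < M \<Longrightarrow> x \<in> space Mx \<Longrightarrow> h j x \<in> {-1..1}"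
    and \<phi>_nonneg: "\<And>x. \<phi> x \<ge> 0"
    and \<phi>_convex: "convex_on UNIV \<phi>"
    and \<phi>_deriv: "\<And>x. (\<phi> has_real_derivative \<phi>' x) (at x)"
    and \<phi>'_deriv: "\<And>x. (\<phi>' has_real_derivative \<phi>'' x) (at x)"
    and \<beta>\<phi>_pos: "\<beta>\<phi> > 0"
    and cond: "\<And>x. \<bar>x\<bar> \<le> 1 \<Longrightarrow> (\<phi>' x)\<^sup>2 \<le> \<beta>\<phi> * \<phi>'' x"
    and \<beta>: "\<beta> \<ge> \<beta>\<phi>"
  shows "(\<integral>Z. loss \<phi> M h (Z n) (mirror_avg \<phi> M h \<beta> n Z) \<partial>(PiM {1..n} (\<lambda>_. P)))
           \<le> Min ((\<lambda>j. \<integral>z. \<phi> (- snd z * h j (fst z)) \<partial>P) ` {..<M}) + \<beta> * ln (real M) / real n"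
proof -
  interpret P: prob_space P by (rule P)
  define PP where "PP = PiM {1..n} (\<lambda>_. P)"
  have PiP: "prob_space PP" unfolding PP_def by (intro prob_space_PiM P)
  interpret Q: prob_space PP by (rule PiP)
  have Mp: "M > 0" using M by simp
  have bp: "\<beta> > 0" using \<beta> \<beta>\<phi>_pos by simp
  have g: "convex_on {-1..1} (\<lambda>x. - exp (- \<phi> x / \<beta>))"
    by (rule concave_g[OF \<phi>_deriv \<phi>'_deriv \<beta>\<phi>_pos cond \<beta>])
  have spP: "space P = space Mx \<times> UNIV"
    using sets_eq_imp_space_eq[OF sets_P] by (simp add: space_pair_measure)
  have mP: "measurable P N = measurable (Mx \<Otimes>\<^sub>M borel) N" for N :: "'b measure"
    by (rule measurable_cong_sets[OF sets_P refl])
  have hm: "(\<lambda>z. h j (fst z)) \<in> borel_measurable P" if "j < M" for j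
    unfolding mP by (rule measurable_compose[OF measurable_fst h_meas[OF that]])
  have sm: "(\<lambda>z. snd z) \<in> borel_measurable P"
    unfolding mP by (rule measurable_snd)
  have comp: "(\<lambda>Z. Z k) \<in> measurable PP P" if "k \<in> {1..n}" for k
    unfolding PP_def using that by (rule measurable_component_singleton)
  have \<phi>m: "\<phi> \<in> borel_measurable borel"
    by (intro borel_measurable_continuous_onI continuous_at_imp_continuous_on ballI DERIV_isCont[OF \<phi>_deriv])
  have lossm: "(\<lambda>Z. loss \<phi> M h (Z k) (\<Theta> Z)) \<in> borel_measurable PP"
    if "k \<in> {1..n}" "\<And>l. l < M \<Longrightarrow> (\<lambda>Z. \<Theta> Z l) \<in> borel_measurable PP" for k \<Theta>
    unfolding loss_def
    apply (rule measurable_compose[OF _ \<phi>m])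
    apply (intro borel_measurable_uminus borel_measurable_times borel_measurable_sum)
      apply (rule measurable_compose[OF comp[OF that(1)] sm])
     apply (simp add: that(2))
    apply (rule measurable_compose[OF comp[OF that(1)] hm])
    apply simp
    done
  have wm: "(\<lambda>Z. mirror_weight \<phi> M h \<beta> Z i j) \<in> borel_measurable PP" if "i < n" for i j
  proof -
    have zm: "(\<lambda>Z. zeta \<phi> M h Z i l) \<in> borel_measurable PP" for l
      unfolding zeta_def using that by (intro borel_measurable_sum lossm) auto
    show ?thesis unfolding mirror_weight_def
      by (intro borel_measurable_divide borel_measurable_sum measurable_compose[OF _ borel_measurable_exp]
          borel_measurable_uminus zm borel_measurable_const)
  qed
  have am: "(\<lambda>Z. mirror_avg \<phi> M h \<beta> n Z j) \<in> borel_measurable PP" for j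
    unfolding mirror_avg_def using n by (intro borel_measurable_times borel_measurable_const borel_measurable_sum wm) auto

  obtain B where B: "\<And>x. x \<in> {-1..1} \<Longrightarrow> \<phi> x \<le> B"
  proof -
    have "compact (\<phi> ` {-1..1})"
      by (intro compact_continuous_image continuous_at_imp_continuous_on ballI DERIV_isCont[OF \<phi>_deriv] compact_Icc)
    then obtain a where "\<forall>y\<in>\<phi> ` {-1..1}. norm y \<le> a"
      using compact_imp_bounded bounded_iff by metis
    then have "\<phi> x \<le> a" if "x \<in> {-1..1}" for x
    proof -
      have "norm (\<phi> x) \<le> a" using that \<open>\<forall>y\<in>\<phi> ` {-1..1}. norm y \<le> a\<close> by blast
      then show ?thesis by simp
    qed
    then show ?thesis using that by blast
  qed
  have good: "AE Z in PP. \<forall>k\<in>{1..n}. snd (Z k) \<in> {-1, 1}"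
  proof (rule AE_finite_allI[OF finite_atLeastAtMost])
    fix k assume "k \<in> {1..n}"
    then show "AE Z in PP. snd (Z k) \<in> {-1, 1}"
      unfolding PP_def using AE_PiM_component[of "{1..n}" "\<lambda>_. P" k "\<lambda>z. snd z \<in> {-1, 1}"] P Y by simp
  qed
  have inS: "Z k \<in> space P" if "Z \<in> space PP" "k \<in> {1..n}" for Z k
    using measurable_space[OF comp[OF that(2)] that(1)] .
  have hr: "h l (fst (Z k)) \<in> {-1..1}" if "Z \<in> space PP" "k \<in> {1..n}" "l < M" for Z k l
    using inS[OF that(1,2)] spP h_range[OF that(3)] by (auto simp: mem_Times_iff)
  have bnd: "\<bar>loss \<phi> M h z \<theta>\<bar> \<le> B"
    if "\<And>l. l < M \<Longrightarrow> h l (fst z) \<in> {-1..1}" "snd z \<in> {-1, 1}" "\<And>l. l < M \<Longrightarrow> \<theta> l \<ge> 0" "(\<Sum>l<M. \<theta> l) = 1" for z \<theta>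
  proof -
    have s: "\<bar>\<Sum>l<M. \<theta> l * h l (fst z)\<bar> \<le> 1"
      using that(1) by (intro simplex_abs that(3,4)) (auto simp: abs_le_iff)
    have "snd z = -1 \<or> snd z = 1" using that(2) by auto
    then have "- snd z * (\<Sum>l<M. \<theta> l * h l (fst z)) \<in> {-1..1}" using s by (elim disjE) (auto simp: abs_le_iff)
    then show ?thesis unfolding loss_def using B \<phi>_nonneg by (simp add: abs_of_nonneg)
  qed
  have intg: "integrable PP (\<lambda>Z. loss \<phi> M h (Z k) (\<Theta> Z))"
    if k: "k \<in> {1..n}" and \<Theta>m: "\<And>l. l < M \<Longrightarrow> (\<lambda>Z. \<Theta> Z l) \<in> borel_measurable PP"
      and \<Theta>0: "\<And>Z l. l < M \<Longrightarrow> \<Theta> Z l \<ge> 0" and \<Theta>1: "\<And>Z. (\<Sum>l<M. \<Theta> Z l) = 1" for k \<Theta>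
  proof (rule Q.integrable_const_bound[where B=B])
    show "AE Z in PP. norm (loss \<phi> M h (Z k) (\<Theta> Z)) \<le> B"
      using good AE_space
    proof eventually_elim
      case (elim Z)
      then show ?case using k by (auto intro!: bnd hr \<Theta>0 \<Theta>1)
    qed
    show "(\<lambda>Z. loss \<phi> M h (Z k) (\<Theta> Z)) \<in> borel_measurable PP"
      by (rule lossm[OF k \<Theta>m])
  qed
  have eint: "integrable PP (\<lambda>Z. loss \<phi> M h (Z k) (\<lambda>l. if l = j then 1 else 0))" if "k \<in> {1..n}" "j < M" for k j
    by (rule intg[OF that(1)]) (use that(2) in auto)
  have wint: "integrable PP (\<lambda>Z. loss \<phi> M h (Z k) (mirror_weight \<phi> M h \<beta> Z (i - 1)))"
    if "k \<in> {1..n}" "i \<in> {1..n}" for k i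
    by (rule intg[OF that(1)]) (use that(2) wm weight_nonneg[OF Mp] weight_sum[OF Mp] in auto)
  have exch: "integral\<^sup>L PP (\<lambda>Z. loss \<phi> M h (Z n) (mirror_weight \<phi> M h \<beta> Z (i - 1)))
      = integral\<^sup>L PP (\<lambda>Z. loss \<phi> M h (Z i) (mirror_weight \<phi> M h \<beta> Z (i - 1)))" if i: "i \<in> {1..n}" for i
  proof -
    define \<sigma> where "\<sigma> = (\<lambda>k::nat. if k = i then n else if k = n then i else k)"
    define t where "t = (\<lambda>\<omega>::nat \<Rightarrow> 'a \<times> real. \<lambda>k\<in>{1..n}. \<omega> (\<sigma> k))"
    have \<sigma>I: "\<sigma> \<in> {1..n} \<rightarrow> {1..n}" using i n by (auto simp: \<sigma>_def)
    have inj: "inj_on \<sigma> {1..n}" unfolding inj_on_def \<sigma>_def by auto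
    have D: "distr PP PP t = PP"
      using distr_PiM_reindex[of "{1..n}" "\<lambda>_. P" \<sigma> "{1..n}", OF P inj \<sigma>I] by (simp add: PP_def t_def)
    have "(\<lambda>\<omega>. \<lambda>k\<in>{1..n}. \<omega> (\<sigma> k)) \<in> measurable PP (PiM {1..n} (\<lambda>_. P))"
      by (intro measurable_restrict comp) (use \<sigma>I in auto)
    then have tm: "t \<in> measurable PP PP" by (simp add: PP_def t_def)
    have Fm: "(\<lambda>Z. loss \<phi> M h (Z n) (mirror_weight \<phi> M h \<beta> Z (i - 1))) \<in> borel_measurable PP"
      by (intro lossm wm) (use n i in auto)
    have "integral\<^sup>L PP (\<lambda>Z. loss \<phi> M h (Z n) (mirror_weight \<phi> M h \<beta> Z (i - 1)))
        = integral\<^sup>L (distr PP PP t) (\<lambda>Z. loss \<phi> M h (Z n) (mirror_weight \<phi> M h \<beta> Z (i - 1)))"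
      by (simp add: D)
    also have "\<dots> = integral\<^sup>L PP (\<lambda>\<omega>. loss \<phi> M h (t \<omega> n) (mirror_weight \<phi> M h \<beta> (t \<omega>) (i - 1)))"
      by (rule integral_distr[OF tm Fm])
    also have "\<dots> = integral\<^sup>L PP (\<lambda>Z. loss \<phi> M h (Z i) (mirror_weight \<phi> M h \<beta> Z (i - 1)))"
    proof (rule Bochner_Integration.integral_cong[OF refl])
      fix \<omega> assume "\<omega> \<in> space PP"
      have "t \<omega> n = \<omega> i" using n by (simp add: t_def \<sigma>_def)
      moreover have "mirror_weight \<phi> M h \<beta> (t \<omega>) (i - 1) = mirror_weight \<phi> M h \<beta> \<omega> (i - 1)"
        by (intro ext weight_cong) (use i in \<open>auto simp: t_def \<sigma>_def\<close>)
      ultimately show "loss \<phi> M h (t \<omega> n) (mirror_weight \<phi> M h \<beta> (t \<omega>) (i - 1))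
          = loss \<phi> M h (\<omega> i) (mirror_weight \<phi> M h \<beta> \<omega> (i - 1))" by simp
    qed
    finally show ?thesis .
  qed

  define E where "E j = (\<integral>z. \<phi> (- snd z * h j (fst z)) \<partial>P)" for j
  have fin: "finite (E ` {..<M})" and ne: "E ` {..<M} \<noteq> {}" using Mp by auto
  obtain j where j: "j < M" and jmin: "Min (E ` {..<M}) = E j"
    using Min_in[OF fin ne] by auto
  have compint: "integral\<^sup>L PP (\<lambda>Z. loss \<phi> M h (Z k) (\<lambda>l. if l = j then 1 else 0)) = E j" if k: "k \<in> {1..n}" for k
  proof -
    have fm: "(\<lambda>z. \<phi> (- snd z * h j (fst z))) \<in> borel_measurable P"
      by (rule measurable_compose[OF borel_measurable_times[OF borel_measurable_uminus[OF sm] hm[OF j]] \<phi>m])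
    have "E j = integral\<^sup>L (distr PP P (\<lambda>Z. Z k)) (\<lambda>z. \<phi> (- snd z * h j (fst z)))"
      using distr_PiM_component[of "{1..n}" "\<lambda>_. P" k] P k by (simp add: PP_def E_def)
    also have "\<dots> = integral\<^sup>L PP (\<lambda>Z. \<phi> (- snd (Z k) * h j (fst (Z k))))"
      by (rule integral_distr[OF comp[OF k] fm])
    finally show ?thesis using j by (simp add: loss_e)
  qed
  have zint: "integrable PP (\<lambda>Z. zeta \<phi> M h Z n j)"
    unfolding zeta_def using eint j by auto
  have Ez: "integral\<^sup>L PP (\<lambda>Z. zeta \<phi> M h Z n j) = real n * E j"
  proof -
    have "integral\<^sup>L PP (\<lambda>Z. zeta \<phi> M h Z n j)
        = (\<Sum>k\<in>{1..n}. integral\<^sup>L PP (\<lambda>Z. loss \<phi> M h (Z k) (\<lambda>l. if l = j then 1 else 0)))"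
      unfolding zeta_def by (rule Bochner_Integration.integral_sum) (rule eint[OF _ j])
    also have "\<dots> = (\<Sum>k\<in>{1..n}. E j)" by (rule sum.cong[OF refl compint])
    finally show ?thesis by simp
  qed
  have sint: "integrable PP (\<lambda>Z. \<Sum>i\<in>{1..n}. loss \<phi> M h (Z i) (mirror_weight \<phi> M h \<beta> Z (i - 1)))"
    using wint by auto
  have LI: "integrable PP (\<lambda>Z. loss \<phi> M h (Z n) (mirror_avg \<phi> M h \<beta> n Z))"
    by (rule intg) (use n am avg_simplex[OF Mp n] in auto)
  have "integral\<^sup>L PP (\<lambda>Z. loss \<phi> M h (Z n) (mirror_avg \<phi> M h \<beta> n Z))
      \<le> integral\<^sup>L PP (\<lambda>Z. (1 / real n) * (\<Sum>i\<in>{1..n}. loss \<phi> M h (Z n) (mirror_weight \<phi> M h \<beta> Z (i - 1))))"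
  proof (rule integral_mono[OF LI])
    show "integrable PP (\<lambda>Z. (1 / real n) * (\<Sum>i\<in>{1..n}. loss \<phi> M h (Z n) (mirror_weight \<phi> M h \<beta> Z (i - 1))))"
      using n by (intro integrable_mult_right Bochner_Integration.integrable_sum wint) auto
    show "loss \<phi> M h (Z n) (mirror_avg \<phi> M h \<beta> n Z)
      \<le> (1 / real n) * (\<Sum>i\<in>{1..n}. loss \<phi> M h (Z n) (mirror_weight \<phi> M h \<beta> Z (i - 1)))" for Z
      by (rule jensen_avg[OF \<phi>_convex n])
  qed
  also have "\<dots> = (1 / real n) * (\<Sum>i\<in>{1..n}. integral\<^sup>L PP (\<lambda>Z. loss \<phi> M h (Z n) (mirror_weight \<phi> M h \<beta> Z (i - 1))))"
    using wint n by (subst integral_mult_right_zero) (auto intro!: Bochner_Integration.integral_sum)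
  also have "\<dots> = (1 / real n) * (\<Sum>i\<in>{1..n}. integral\<^sup>L PP (\<lambda>Z. loss \<phi> M h (Z i) (mirror_weight \<phi> M h \<beta> Z (i - 1))))"
    using exch by simp
  also have "\<dots> = (1 / real n) * integral\<^sup>L PP (\<lambda>Z. \<Sum>i\<in>{1..n}. loss \<phi> M h (Z i) (mirror_weight \<phi> M h \<beta> Z (i - 1)))"
    using wint by (subst Bochner_Integration.integral_sum) auto
  also have "\<dots> \<le> (1 / real n) * integral\<^sup>L PP (\<lambda>Z. zeta \<phi> M h Z n j + \<beta> * ln (real M))"
  proof (intro mult_left_mono integral_mono_AE sint)
    show "integrable PP (\<lambda>Z. zeta \<phi> M h Z n j + \<beta> * ln (real M))"
      using zint by auto
    show "AE Z in PP. (\<Sum>i\<in>{1..n}. loss \<phi> M h (Z i) (mirror_weight \<phi> M h \<beta> Z (i - 1)))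
        \<le> zeta \<phi> M h Z n j + \<beta> * ln (real M)"
      using good AE_space
    proof eventually_elim
      case (elim Z)
      show ?case by (rule pathwise[OF g bp Mp j]) (use elim hr in auto)
    qed
  qed simp
  also have "\<dots> = (1 / real n) * (real n * E j + \<beta> * ln (real M))"
    using zint Ez by (simp add: Q.prob_space)
  also have "\<dots> = E j + \<beta> * ln (real M) / real n"
    using n by (simp add: field_simps)
  finally show ?thesis unfolding PP_def E_def[symmetric] jmin .
qed

end
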